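(* Suppose the solution sets of (P) and (D) are nonempty, $A$ has full row rank, $\{\tau_k\}$ is positive nonincreasing with $\tau_k\downarrow\tau_\infty>0$, and let $\{(y^l,x^l)\}$ be the infinite sequence generated by Algorithm Snipal with stopping criterion (A'): $\|\nabla\psi_l(y^{l+1})\|\le\frac{\min(\sqrt{\tau_l},1)}{\sigma_l}\epsilon_l$, $\epsilon_l\ge0$, $\sum_l\epsilon_l<\infty$. For $k\ge0$ let $\bar y^{k+1}$ be an exact minimizer of $L_{\sigma_k}(y;x^k)$ over $y\in\mathbb{R}^m$ (assumed to exist). Then: (a) $\bar x^{k+1}:=\Pi_K(x^k-\sigma_k(c-A^T\bar y^{k+1}))$ is the unique solution of $\min\{c^Tx+\frac{1}{2\sigma_k}\|x-x^k\|^2\mid Ax=b,\ x\in K\}$; (b) there exists $\bar\sigma>0$, independent of $k$, such that whenever $\sigma_k\ge\bar\sigma$, $\bar x^{k+1}$ solves (P); (c) if $x^k$ is a solution of (P), then $\bar y^{k+1}$ solves (D).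
   Context: Data: $A\in\mathbb{R}^{m\times n}$, $b\in\mathbb{R}^m$, $c\in\mathbb{R}^n$, $K=\{x\in\mathbb{R}^n\mid l\le x\le u\}$ with $l_i\in[-\infty,\infty)$, $u_i\in(-\infty,\infty]$; $\delta_K$ its indicator, $\delta_K^*$ its conjugate, $\Pi_K$ the projection onto $K$. (P): $\min\{c^Tx+\delta_K(x)\mid Ax=b\}$; (D): $\max\{-\delta_K^*(A^Ty-c)+b^Ty\}$. $L_\sigma(y;x)=-b^Ty-\langle\Pi_K(x-\sigma(c-A^Ty)),c-A^Ty\rangle-\frac{1}{2\sigma}\|\Pi_K(x-\sigma(c-A^Ty))-x\|^2$. Algorithm Snipal: given $(x^0,y^0)$, $\sigma_0>0$, nondecreasing $\sigma_k\uparrow\sigma_\infty\le\infty$; for $k=0,1,\dots$: compute $y^{k+1}$ as an approximate minimizer of $\psi_k(y):=L_{\sigma_k}(y;x^k)+\frac{\tau_k}{2\sigma_k}\|y-y^k\|^2$, then $x^{k+1}=\Pi_K(x^k-\sigma_k(c-A^Ty^{k+1}))$. $\nabla\psi_k(y)=-b+A\Pi_K(x^k+\sigma_k(A^Ty-c))+\tau_k\sigma_k^{-1}(y-y^k)$. *)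

theory Defs
  imports "HOL-Analysis.Analysis"
begin

definition boxK :: "('n::finite \<Rightarrow> ereal) \<Rightarrow> ('n \<Rightarrow> ereal) \<Rightarrow> (real^'n) set" where
  "boxK l u = {x. \<forall>i. l i \<le> ereal (x $ i) \<and> ereal (x $ i) \<le> u i}"

definition projK :: "('n::finite \<Rightarrow> ereal) \<Rightarrow> ('n \<Rightarrow> ereal) \<Rightarrow> real^'n \<Rightarrow> real^'n" where
  "projK l u z = closest_point (boxK l u) z"

definition supp_fun :: "(real^'n::finite) set \<Rightarrow> real^'n \<Rightarrow> ereal" where
  "supp_fun S z = (SUP x\<in>S. ereal (z \<bullet> x))"

definition primal_sol :: "real^'n^'m \<Rightarrow> real^'m \<Rightarrow> real^'n \<Rightarrow> ('n::finite \<Rightarrow> ereal) \<Rightarrow> ('n \<Rightarrow> ereal) \<Rightarrow> real^'n \<Rightarrow> bool" where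
  "primal_sol A b c l u x \<longleftrightarrow> x \<in> boxK l u \<and> A *v x = b \<and>
     (\<forall>x'. x' \<in> boxK l u \<and> A *v x' = b \<longrightarrow> c \<bullet> x \<le> c \<bullet> x')"

definition dual_obj :: "real^'n^'m \<Rightarrow> real^'m \<Rightarrow> real^'n \<Rightarrow> ('n::finite \<Rightarrow> ereal) \<Rightarrow> ('n \<Rightarrow> ereal) \<Rightarrow> real^'m \<Rightarrow> ereal" where
  "dual_obj A b c l u y = ereal (b \<bullet> y) - supp_fun (boxK l u) (transpose A *v y - c)"

definition dual_sol :: "real^'n^'m \<Rightarrow> real^'m \<Rightarrow> real^'n \<Rightarrow> ('n::finite \<Rightarrow> ereal) \<Rightarrow> ('n \<Rightarrow> ereal) \<Rightarrow> real^'m \<Rightarrow> bool" where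
  "dual_sol A b c l u y \<longleftrightarrow> dual_obj A b c l u y \<noteq> -\<infinity> \<and>
     (\<forall>y'. dual_obj A b c l u y' \<le> dual_obj A b c l u y)"

definition Lsig :: "real^'n^'m \<Rightarrow> real^'m \<Rightarrow> real^'n \<Rightarrow> ('n::finite \<Rightarrow> ereal) \<Rightarrow> ('n \<Rightarrow> ereal) \<Rightarrow> real \<Rightarrow> real^'m \<Rightarrow> real^'n \<Rightarrow> real" where
  "Lsig A b c l u \<sigma> y x =
     (let w = c - transpose A *v y; p = projK l u (x - \<sigma> *\<^sub>R w)
      in - (b \<bullet> y) - p \<bullet> w - (1 / (2 * \<sigma>)) * (norm (p - x))\<^sup>2)"

text \<open>Gradient of psi_k(y) = L_sigma(y; xk) + tau/(2 sigma) ||y - yk||^2.\<close>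
definition grad_psi :: "real^'n^'m \<Rightarrow> real^'m \<Rightarrow> real^'n \<Rightarrow> ('n::finite \<Rightarrow> ereal) \<Rightarrow> ('n \<Rightarrow> ereal) \<Rightarrow> real \<Rightarrow> real \<Rightarrow> real^'n \<Rightarrow> real^'m \<Rightarrow> real^'m \<Rightarrow> real^'m" where
  "grad_psi A b c l u \<sigma> \<tau> xk yk y =
     - b + A *v projK l u (xk + \<sigma> *\<^sub>R (transpose A *v y - c)) + (\<tau> / \<sigma>) *\<^sub>R (y - yk)"

end

theory Submission
  imports Defs
begin

lemma ereal_le_closed: "closed {x::real^'n::finite. (l::ereal) \<le> ereal (x $ i)}"
proof (cases l)
  case (real r)
  then show ?thesis by (simp add: closed_Collect_le continuous_on_component continuous_on_const)
qed auto

lemma ereal_ge_closed: "closed {x::real^'n::finite. ereal (x $ i) \<le> (u::ereal)}"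
proof (cases u)
  case (real r)
  then show ?thesis by (simp add: closed_Collect_le continuous_on_component continuous_on_const)
qed auto

lemma boxK_closed: "closed (boxK l u)"
proof -
  have "boxK l u = (\<Inter>i. {x. l i \<le> ereal (x $ i)} \<inter> {x. ereal (x $ i) \<le> u i})"
    unfolding boxK_def by (simp add: set_eq_iff)
  moreover have "closed (\<Inter>i. {x::real^'a. l i \<le> ereal (x $ i)} \<inter> {x. ereal (x $ i) \<le> u i})"
    by (intro closed_INT ballI closed_Int ereal_le_closed ereal_ge_closed)
  ultimately show ?thesis by (simp only:)
qed

lemma boxK_convex: "convex (boxK l u)"
  unfolding convex_alt boxK_def
proof (clarsimp)
  fix x y :: "real^'a" and t :: real and i
  assume x: "\<forall>i. l i \<le> ereal (x $ i) \<and> ereal (x $ i) \<le> u i"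
    and y: "\<forall>i. l i \<le> ereal (y $ i) \<and> ereal (y $ i) \<le> u i" and t: "0 \<le> t" "t \<le> 1"
  have "(1-t) * min (x$i) (y$i) \<le> (1-t) * x$i" "t * min (x$i) (y$i) \<le> t * y$i"
     "(1-t) * max (x$i) (y$i) \<ge> (1-t) * x$i" "t * max (x$i) (y$i) \<ge> t * y$i"
    using t by (auto intro: mult_left_mono)
  then have "min (x$i) (y$i) \<le> (1 - t) * x $ i + t * y $ i" "(1 - t) * x $ i + t * y $ i \<le> max (x$i) (y$i)"
    by (simp_all add: algebra_simps)
  then have "ereal (min (x$i) (y$i)) \<le> ereal ((1 - t) * x $ i + t * y $ i)"
       "ereal ((1 - t) * x $ i + t * y $ i) \<le> ereal (max (x$i) (y$i))" by (simp_all only: ereal_less_eq(3))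
  moreover have "l i \<le> ereal (min (x$i) (y$i))" "ereal (max (x$i) (y$i)) \<le> u i"
    using x y by (auto simp: min_def max_def)
  ultimately show "l i \<le> ereal ((1 - t) * x $ i + t * y $ i) \<and> ereal ((1 - t) * x $ i + t * y $ i) \<le> u i"
    by (meson order_trans)
qed

lemma projK_in: "boxK l u \<noteq> {} \<Longrightarrow> projK l u v \<in> boxK l u"
  unfolding projK_def by (rule closest_point_in_set[OF boxK_closed])

lemma projK_dot: "z \<in> boxK l u \<Longrightarrow> (v - projK l u v) \<bullet> (z - projK l u v) \<le> 0"
  unfolding projK_def by (rule closest_point_dot[OF boxK_convex boxK_closed])

lemma transp_inner: "(transpose A *v y) \<bullet> z = y \<bullet> (A *v (z::real^'n::finite))"
  by (simp add: dot_lmul_matrix)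

lemma coord_perturb:
  fixes z d :: real and l u :: ereal
  assumes "l \<le> ereal z" "ereal z \<le> u" "ereal z = l \<Longrightarrow> d \<ge> 0" "ereal z = u \<Longrightarrow> d \<le> 0"
  shows "\<exists>T>0. \<forall>t. 0 \<le> t \<and> t \<le> T \<longrightarrow> l \<le> ereal (z + t*d) \<and> ereal (z + t*d) \<le> u"
proof -
  have lo: "\<exists>T>0. \<forall>t. 0 \<le> t \<and> t \<le> T \<longrightarrow> l \<le> ereal (z + t*d)"
  proof (cases "d \<ge> 0")
    case True
    then have "\<forall>t. 0 \<le> t \<longrightarrow> l \<le> ereal (z + t*d)"
      using assms(1) by (metis ereal_less_eq(3) le_add_same_cancel1 order_trans zero_le_mult_iff)
    then show ?thesis by (intro exI[of _ 1]) auto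
  next
    case False
    then have "l \<noteq> ereal z" using assms(3) by auto
    then have lt: "l < ereal z" using assms(1) by auto
    show ?thesis
    proof (cases l)
      case (real r)
      then have rz: "r < z" using lt by auto
      have "\<forall>t. 0 \<le> t \<and> t \<le> (z - r) / (- d) \<longrightarrow> l \<le> ereal (z + t*d)"
      proof (intro allI impI)
        fix t assume t: "0 \<le> t \<and> t \<le> (z - r) / (- d)"
        have "t * (-d) \<le> (z - r) / (-d) * (-d)" using t False by (intro mult_right_mono) auto
        then have "t * (-d) \<le> z - r" using False by simp
        then show "l \<le> ereal (z + t*d)" using real by simp
      qed
      moreover have "(z - r) / (- d) > 0" using False rz by (intro divide_pos_pos) auto
      ultimately show ?thesis by blast
    qed (use lt in \<open>auto intro!: exI[of _ 1]\<close>)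
  qed
  have hi: "\<exists>T>0. \<forall>t. 0 \<le> t \<and> t \<le> T \<longrightarrow> ereal (z + t*d) \<le> u"
  proof (cases "d \<le> 0")
    case True
    then have "\<forall>t. 0 \<le> t \<longrightarrow> ereal (z + t*d) \<le> u"
      using assms(2) by (metis add_le_same_cancel1 ereal_less_eq(3) mult_nonneg_nonpos order_trans)
    then show ?thesis by (intro exI[of _ 1]) auto
  next
    case False
    then have "u \<noteq> ereal z" using assms(4) by auto
    then have lt: "ereal z < u" using assms(2) by auto
    show ?thesis
    proof (cases u)
      case (real r)
      then have rz: "z < r" using lt by auto
      have "\<forall>t. 0 \<le> t \<and> t \<le> (r - z) / d \<longrightarrow> ereal (z + t*d) \<le> u"
      proof (intro allI impI)
        fix t assume t: "0 \<le> t \<and> t \<le> (r - z) / d"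
        have "t * d \<le> (r - z) / d * d" using t False by (intro mult_right_mono) auto
        then have "t * d \<le> r - z" using False by simp
        then show "ereal (z + t*d) \<le> u" using real by simp
      qed
      then show ?thesis using False rz by (intro exI[of _ "(r - z) / d"]) auto
    qed (use lt in \<open>auto intro!: exI[of _ 1]\<close>)
  qed
  from lo hi obtain T1 T2 where "T1 > 0" "T2 > 0"
    "\<forall>t. 0 \<le> t \<and> t \<le> T1 \<longrightarrow> l \<le> ereal (z + t*d)"
    "\<forall>t. 0 \<le> t \<and> t \<le> T2 \<longrightarrow> ereal (z + t*d) \<le> u" by blast
  then show ?thesis by (intro exI[of _ "min T1 T2"]) auto
qed

lemma vec_perturb:
  fixes z d :: "real^'n::finite"
  assumes "z \<in> boxK l u"
    and "\<forall>i. (ereal (z$i) = l i \<longrightarrow> d$i \<ge> 0) \<and> (ereal (z$i) = u i \<longrightarrow> d$i \<le> 0)"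
  shows "\<exists>t>0. z + t *\<^sub>R d \<in> boxK l u"
proof -
  have "\<forall>i. \<exists>T>0. \<forall>t. 0 \<le> t \<and> t \<le> T \<longrightarrow> l i \<le> ereal (z$i + t*d$i) \<and> ereal (z$i + t*d$i) \<le> u i"
    using assms unfolding boxK_def by (intro allI coord_perturb) auto
  then obtain T where T: "\<And>i. T i > 0"
    "\<And>i t. 0 \<le> t \<and> t \<le> T i \<longrightarrow> l i \<le> ereal (z$i + t*d$i) \<and> ereal (z$i + t*d$i) \<le> u i"
    by metis
  define t0 where "t0 = Min (range T)"
  have fin: "finite (range T)" by simp
  have t0pos: "t0 > 0" unfolding t0_def using T(1) fin by (subst Min_gr_iff) auto
  have "t0 \<le> T i" for i unfolding t0_def using fin by (intro Min_le) auto
  then have "l i \<le> ereal (z$i + t0*d$i) \<and> ereal (z$i + t0*d$i) \<le> u i" for i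
    using T(2)[of t0 i] t0pos by auto
  then have "z + t0 *\<^sub>R d \<in> boxK l u"
    unfolding boxK_def by simp
  then show ?thesis using t0pos by blast
qed

definition Cp :: "('n::finite \<Rightarrow> bool \<times> bool) \<Rightarrow> (real^'n) set" where
  "Cp P = {h. \<forall>i. (h$i > 0 \<longrightarrow> fst (P i)) \<and> (h$i < 0 \<longrightarrow> snd (P i))}"

definition pat :: "('n::finite \<Rightarrow> ereal) \<Rightarrow> ('n \<Rightarrow> ereal) \<Rightarrow> real^'n \<Rightarrow> ('n \<Rightarrow> bool \<times> bool)" where
  "pat l u z = (\<lambda>i. (ereal (z$i) = l i, ereal (z$i) = u i))"

lemma Cp_normal:
  assumes "z \<in> boxK l u" "w \<in> boxK l u" "h \<in> Cp (pat l u z)"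
  shows "h \<bullet> (w - z) \<ge> 0"
proof -
  have "h$i * (w$i - z$i) \<ge> 0" for i
  proof -
    consider "h$i > 0" | "h$i < 0" | "h$i = 0" by linarith
    then show ?thesis
    proof cases
      case 1
      then have "ereal (z$i) = l i" using assms(3) unfolding Cp_def pat_def by auto
      moreover have "l i \<le> ereal (w$i)" using assms(2) by (simp add: boxK_def)
      ultimately have "z$i \<le> w$i" by (metis ereal_less_eq(3))
      then show ?thesis using 1 by simp
    next
      case 2
      then have "ereal (z$i) = u i" using assms(3) unfolding Cp_def pat_def by auto
      moreover have "ereal (w$i) \<le> u i" using assms(2) by (simp add: boxK_def)
      ultimately have "w$i \<le> z$i" by (metis ereal_less_eq(3))
      then show ?thesis using 2 by (simp add: mult_nonpos_nonpos)
    qed simp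
  qed
  then show ?thesis unfolding inner_vec_def by (intro sum_nonneg) simp
qed

lemma normal_key:
  fixes d :: "real^'n::finite"
  assumes z: "z \<in> boxK l u" and h: "\<forall>w\<in>boxK l u. h \<bullet> (w - z) \<ge> 0"
    and d: "\<forall>j. (ereal (z$j) = l j \<longrightarrow> d$j \<ge> 0) \<and> (ereal (z$j) = u j \<longrightarrow> d$j \<le> 0)"
  shows "h \<bullet> d \<ge> 0"
proof -
  obtain t where t: "t > 0" "z + t *\<^sub>R d \<in> boxK l u" using vec_perturb[OF z d] by blast
  then have "h \<bullet> ((z + t *\<^sub>R d) - z) \<ge> 0" using h by blast
  then have "h \<bullet> (t *\<^sub>R d) \<ge> 0" by simp
  then show ?thesis using t(1) by (simp add: zero_le_mult_iff)
qed

lemma normal_Cp: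
  assumes z: "z \<in> boxK l u" and h: "\<forall>w\<in>boxK l u. h \<bullet> (w - z) \<ge> 0"
  shows "h \<in> Cp (pat l u z)"
  unfolding Cp_def pat_def
proof (clarsimp, intro conjI impI)
  fix i
  note key = normal_key[OF z h]
  show "ereal (z $ i) = l i" if "0 < h $ i"
  proof (rule ccontr)
    assume ne: "ereal (z $ i) \<noteq> l i"
    have "h \<bullet> (- axis i 1) \<ge> 0"
    proof (rule key, rule allI)
      fix j show "(ereal (z$j) = l j \<longrightarrow> (- axis i 1)$j \<ge> (0::real)) \<and> (ereal (z$j) = u j \<longrightarrow> (- axis i 1)$j \<le> (0::real))"
        using ne by (cases "j = i") (simp_all add: axis_def)
    qed
    then show False using that by (simp add: inner_axis)
  qed
  show "ereal (z $ i) = u i" if "h $ i < 0"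
  proof (rule ccontr)
    assume ne: "ereal (z $ i) \<noteq> u i"
    have "h \<bullet> (axis i 1) \<ge> 0"
    proof (rule key, rule allI)
      fix j show "(ereal (z$j) = l j \<longrightarrow> (axis i 1)$j \<ge> (0::real)) \<and> (ereal (z$j) = u j \<longrightarrow> (axis i 1)$j \<le> (0::real))"
        using ne by (cases "j = i") (simp_all add: axis_def)
    qed
    then show False using that by (simp add: inner_axis)
  qed
qed

definition MP :: "real^'n^'m \<Rightarrow> ('n::finite \<Rightarrow> bool \<times> bool) \<Rightarrow> (real^'n) set" where
  "MP A P = {transpose A *v y + h | y h. h \<in> Cp P}"

definition GP :: "real^'n^'m::finite \<Rightarrow> ('n::finite \<Rightarrow> bool \<times> bool) \<Rightarrow> (real^'n) set" where
  "GP A P = range (\<lambda>j. transpose A *v axis j 1) \<union> range (\<lambda>j. - (transpose A *v axis j 1))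
     \<union> (\<lambda>i. axis i 1) ` {i. fst (P i)} \<union> (\<lambda>i. - axis i 1) ` {i. snd (P i)}"

lemma hull_sum: "finite I \<Longrightarrow> (\<forall>i\<in>I. f i \<in> convex_cone hull S) \<Longrightarrow> sum f I \<in> convex_cone hull S"
  by (induction I rule: finite_induct) (auto intro: convex_cone_hull_add convex_cone_hull_contains_0)

lemma signed_in_hull:
  assumes "a > 0 \<Longrightarrow> g \<in> S" "a < 0 \<Longrightarrow> - g \<in> S"
  shows "a *\<^sub>R g \<in> convex_cone hull S"
proof -
  consider "a > 0" | "a < 0" | "a = 0" by linarith
  then show ?thesis
  proof cases
    case 1
    then show ?thesis using assms(1) by (intro convex_cone_hull_mul hull_inc) auto
  next
    case 2
    then have "(-a) *\<^sub>R (- g) \<in> convex_cone hull S" using assms(2) by (intro convex_cone_hull_mul hull_inc) auto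
    then show ?thesis by simp
  qed (simp add: convex_cone_hull_contains_0)
qed

lemma Cp_0: "0 \<in> Cp P" unfolding Cp_def by simp

lemma Cp_add: "h \<in> Cp P \<Longrightarrow> h' \<in> Cp P \<Longrightarrow> h + h' \<in> Cp P"
  unfolding Cp_def by (auto; smt (verit))

lemma Cp_scale: "h \<in> Cp P \<Longrightarrow> c \<ge> 0 \<Longrightarrow> c *\<^sub>R h \<in> Cp P"
  unfolding Cp_def by (auto simp: zero_less_mult_iff mult_less_0_iff)

lemma transp_expand: "transpose A *v y = (\<Sum>j\<in>UNIV. y$j *\<^sub>R (transpose A *v axis j 1))"
proof -
  have "transpose A *v y = transpose A *v (\<Sum>j\<in>UNIV. y$j *\<^sub>R axis j 1)"
    using basis_expansion[of y] by (simp add: scalar_mult_eq_scaleR)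
  also have "\<dots> = (\<Sum>j\<in>UNIV. transpose A *v (y$j *\<^sub>R axis j 1))"
    by (rule linear_sum[OF matrix_vector_mul_linear])
  also have "\<dots> = (\<Sum>j\<in>UNIV. y$j *\<^sub>R (transpose A *v axis j 1))"
    by (simp only: matrix_vector_mult_scaleR)
  finally show ?thesis .
qed

lemma vec_expand: "(h::real^'n::finite) = (\<Sum>i\<in>UNIV. h$i *\<^sub>R axis i 1)"
  using basis_expansion[of h] by (simp add: scalar_mult_eq_scaleR)

lemma MP_sub: "MP A P \<subseteq> convex_cone hull GP A P"
proof
  fix m assume "m \<in> MP A P"
  then obtain y h where m: "m = transpose A *v y + h" and h: "h \<in> Cp P" unfolding MP_def by blast
  have "transpose A *v y \<in> convex_cone hull GP A P"
    unfolding transp_expand[of A y]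
    by (intro hull_sum ballI signed_in_hull) (auto simp: GP_def)
  moreover have "h \<in> convex_cone hull GP A P"
  proof (subst vec_expand, intro hull_sum ballI signed_in_hull)
    fix i
    show "axis i 1 \<in> GP A P" if "0 < h$i"
      using h that unfolding Cp_def GP_def by auto
    show "- axis i 1 \<in> GP A P" if "h$i < 0"
      using h that unfolding Cp_def GP_def by auto
  qed simp
  ultimately show "m \<in> convex_cone hull GP A P" unfolding m by (rule convex_cone_hull_add)
qed

lemma MP_cone: "convex_cone (MP A P)"
  unfolding convex_cone_iff
proof (intro conjI ballI allI impI)
  show "0 \<in> MP A P" unfolding MP_def using Cp_0 by (intro CollectI exI[of _ 0]) auto
  fix x y assume "x \<in> MP A P" "y \<in> MP A P"
  then obtain y1 h1 y2 h2 where "x = transpose A *v y1 + h1" "h1 \<in> Cp P" "y = transpose A *v y2 + h2" "h2 \<in> Cp P"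
    unfolding MP_def by blast
  then have "x + y = transpose A *v (y1 + y2) + (h1 + h2) \<and> h1 + h2 \<in> Cp P"
    by (simp add: Cp_add matrix_vector_right_distrib)
  then show "x + y \<in> MP A P" unfolding MP_def by blast
next
  fix x and c :: real assume "x \<in> MP A P" "0 \<le> c"
  then obtain y1 h1 where "x = transpose A *v y1 + h1" "h1 \<in> Cp P"
    unfolding MP_def by blast
  then have "c *\<^sub>R x = transpose A *v (c *\<^sub>R y1) + c *\<^sub>R h1 \<and> c *\<^sub>R h1 \<in> Cp P"
    using \<open>0 \<le> c\<close> by (simp add: Cp_scale matrix_vector_mult_scaleR scaleR_right_distrib)
  then show "c *\<^sub>R x \<in> MP A P" unfolding MP_def by blast
qed

lemma mv_neg: "(B::real^'a^'b) *v (- v) = - (B *v v)"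
  by (metis diff_0 matrix_vector_mult_diff_distrib matrix_vector_mult_0_right)

lemma GP_sub: "GP A P \<subseteq> MP A P"
proof -
  have "transpose A *v axis j 1 \<in> MP A P" for j
    unfolding MP_def using Cp_0 by (intro CollectI exI[of _ "axis j 1"] exI[of _ 0]) auto
  moreover have "- (transpose A *v axis j 1) \<in> MP A P" for j
    unfolding MP_def using Cp_0 by (intro CollectI exI[of _ "- axis j 1"] exI[of _ 0]) (auto simp only: mv_neg add_0_right)
  moreover have "axis i 1 \<in> MP A P" if "fst (P i)" for i
  proof -
    have "axis i 1 \<in> Cp P" using that unfolding Cp_def by (auto simp: axis_def)
    then show ?thesis unfolding MP_def by (intro CollectI exI[of _ 0] exI[of _ "axis i 1"]) auto
  qed
  moreover have "- axis i 1 \<in> MP A P" if "snd (P i)" for i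
  proof -
    have "- axis i 1 \<in> Cp P" using that unfolding Cp_def by (auto simp: axis_def)
    then show ?thesis unfolding MP_def by (intro CollectI exI[of _ 0] exI[of _ "- axis i 1"]) auto
  qed
  ultimately show ?thesis unfolding GP_def by blast
qed

lemma MP_hull: "MP A P = convex_cone hull GP A P"
  using MP_sub[of A P] hull_minimal[where S=convex_cone, OF GP_sub[of A P] MP_cone[of A P]] by blast

lemma MP_closed: "closed (MP A P)"
proof -
  have "finite (GP A P)" unfolding GP_def by simp
  then show ?thesis unfolding MP_hull by (intro polyhedron_imp_closed polyhedron_convex_cone_hull)
qed

lemma kkt_opt:
  assumes z: "z \<in> boxK l u" and Az: "A *v z = b" and h: "c - transpose A *v y \<in> Cp (pat l u z)"
  shows "primal_sol A b c l u z"
  unfolding primal_sol_def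
proof (intro conjI z Az allI impI)
  fix x' assume x': "x' \<in> boxK l u \<and> A *v x' = b"
  have "(c - transpose A *v y) \<bullet> (x' - z) \<ge> 0" using Cp_normal[OF z _ h] x' by blast
  moreover have "(transpose A *v y) \<bullet> (x' - z) = 0"
    using x' Az by (simp only: transp_inner matrix_vector_mult_diff_distrib) simp
  ultimately show "c \<bullet> z \<le> c \<bullet> x'" by (simp add: inner_diff_left inner_diff_right)
qed

lemma kkt_exists:
  fixes A :: "real^'n::finite^'m::finite"
  assumes ps: "primal_sol A b c l u z"
  shows "c \<in> MP A (pat l u z)"
proof (rule ccontr)
  assume nc: "c \<notin> MP A (pat l u z)"
  let ?M = "MP A (pat l u z)"
  have z: "z \<in> boxK l u" and Az: "A *v z = b" using ps unfolding primal_sol_def by auto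
  have cl: "closed ?M" by (rule MP_closed)
  have cv: "convex ?M" using MP_cone[of A "pat l u z"] unfolding convex_cone_def by blast
  have ne: "?M \<noteq> {}" using MP_cone[of A "pat l u z"] unfolding convex_cone_def by blast
  define p where "p = closest_point ?M c"
  have pM: "p \<in> ?M" unfolding p_def using closest_point_in_set[OF cl ne] .
  have dot: "(c - p) \<bullet> (m - p) \<le> 0" if "m \<in> ?M" for m
    unfolding p_def using closest_point_dot[OF cv cl that] .
  have "(c - p) \<bullet> (0 - p) \<le> 0" using dot convex_cone_contains_0[OF MP_cone] by blast
  moreover have "(c - p) \<bullet> (2 *\<^sub>R p - p) \<le> 0" using dot convex_cone_scaleR[OF MP_cone _ pM, of 2] by simp
  ultimately have cp0: "(c - p) \<bullet> p = 0" by (simp add: inner_diff_right algebra_simps)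
  define d where "d = p - c"
  have dm: "d \<bullet> m \<ge> 0" if "m \<in> ?M" for m
    using dot[OF that] cp0 unfolding d_def by (simp add: inner_diff_right inner_diff_left inner_commute algebra_simps)
  have "c \<noteq> p" using nc pM by blast
  then have "(c - p) \<bullet> (c - p) > 0" by simp
  then have dc: "d \<bullet> c < 0" using cp0 unfolding d_def by (simp add: inner_diff_right inner_diff_left inner_commute algebra_simps)
  have "transpose A *v (- (A *v d)) + 0 \<in> ?M" unfolding MP_def using Cp_0 by blast
  then have "d \<bullet> (transpose A *v (- (A *v d))) \<ge> 0" using dm by fastforce
  then have "- ((A *v d) \<bullet> (A *v d)) \<ge> 0" by (simp only: inner_commute[of d] transp_inner) simp
  then have Ad: "A *v d = 0" by (metis inner_ge_zero inner_eq_zero_iff neg_0_le_iff_le order_antisym)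
  have cond: "\<forall>i. (ereal (z$i) = l i \<longrightarrow> d$i \<ge> 0) \<and> (ereal (z$i) = u i \<longrightarrow> d$i \<le> 0)"
  proof (intro allI conjI impI)
    fix i
    assume "ereal (z$i) = l i"
    then have "axis i 1 \<in> Cp (pat l u z)" unfolding Cp_def pat_def by (auto simp: axis_def)
    then have "transpose A *v 0 + axis i 1 \<in> ?M" unfolding MP_def by blast
    then have "d \<bullet> axis i 1 \<ge> 0" using dm by fastforce
    then show "d$i \<ge> 0" by (simp add: inner_axis)
  next
    fix i
    assume "ereal (z$i) = u i"
    then have "- axis i 1 \<in> Cp (pat l u z)" unfolding Cp_def pat_def by (auto simp: axis_def)
    then have "transpose A *v 0 + - axis i 1 \<in> ?M" unfolding MP_def by blast
    then have "d \<bullet> (- axis i 1) \<ge> 0" using dm by fastforce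
    then show "d$i \<le> 0" by (simp add: inner_axis)
  qed
  obtain t where t: "t > 0" "z + t *\<^sub>R d \<in> boxK l u" using vec_perturb[OF z cond] by blast
  have "A *v (z + t *\<^sub>R d) = b" using Az Ad by (simp add: matrix_vector_right_distrib matrix_vector_mult_scaleR)
  then have "c \<bullet> z \<le> c \<bullet> (z + t *\<^sub>R d)" using ps t(2) unfolding primal_sol_def by blast
  then have "0 \<le> t * (c \<bullet> d)" by (simp add: inner_add_right)
  then have "c \<bullet> d \<ge> 0" using t(1) by (simp add: zero_le_mult_iff)
  then show False using dc by (simp add: inner_commute)
qed

lemma norm_sum_sq: "(norm (a + b))\<^sup>2 = (norm a)\<^sup>2 + (norm b)\<^sup>2 + 2 * (a \<bullet> (b::'a::real_inner))"
  using dot_norm[of a b] by simp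

lemma prox_ineq:
  fixes x z :: "real^'n::finite" and \<sigma> :: real and w :: "real^'n"
  assumes s: "\<sigma> > 0" and z: "z \<in> boxK l u"
  defines "p \<equiv> projK l u (x - \<sigma> *\<^sub>R w)"
  shows "w \<bullet> z + (1/(2*\<sigma>)) * (norm (z - x))\<^sup>2 \<ge> w \<bullet> p + (1/(2*\<sigma>)) * (norm (p - x))\<^sup>2 + (1/(2*\<sigma>)) * (norm (z - p))\<^sup>2"
proof -
  have dot: "(x - \<sigma> *\<^sub>R w - p) \<bullet> (z - p) \<le> 0" unfolding p_def by (rule projK_dot[OF z])
  have eq2: "(x - \<sigma> *\<^sub>R w - p) \<bullet> (z - p) = - ((p - x) \<bullet> (z - p) + \<sigma> * (w \<bullet> (z - p)))"
    by (simp add: inner_diff_left inner_diff_right inner_commute algebra_simps)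
  have key: "(p - x) \<bullet> (z - p) + \<sigma> * (w \<bullet> (z - p)) \<ge> 0" using dot unfolding eq2 by linarith
  have e: "(norm (z - x))\<^sup>2 = (norm (z - p))\<^sup>2 + (norm (p - x))\<^sup>2 + 2 * ((z - p) \<bullet> (p - x))"
    using norm_sum_sq[of "z - p" "p - x"] by simp
  have wz: "w \<bullet> z = w \<bullet> p + w \<bullet> (z - p)" by (simp add: inner_diff_right)
  have "w \<bullet> z + (1/(2*\<sigma>)) * (norm (z - x))\<^sup>2 - (w \<bullet> p + (1/(2*\<sigma>)) * (norm (p - x))\<^sup>2 + (1/(2*\<sigma>)) * (norm (z - p))\<^sup>2)
        = (1/\<sigma>) * ((p - x) \<bullet> (z - p) + \<sigma> * (w \<bullet> (z - p)))"
    unfolding e wz using s by (simp add: field_simps inner_commute)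
  moreover have "(1/\<sigma>) * ((p - x) \<bullet> (z - p) + \<sigma> * (w \<bullet> (z - p))) \<ge> 0" using key s by simp
  ultimately show ?thesis by linarith
qed

lemma arith1:
  fixes \<sigma> t D a \<delta> :: real
  assumes "\<sigma> > 0" "t > 0" "\<delta>\<^sup>2/(2*\<sigma>) + t*D - t*a*\<delta> \<le> 0"
  shows "D \<le> \<sigma>*t*a\<^sup>2/2"
proof -
  have "(\<delta> - \<sigma>*t*a)\<^sup>2/(2*\<sigma>) \<ge> 0" using assms by simp
  moreover have "(\<delta> - \<sigma>*t*a)\<^sup>2/(2*\<sigma>) = \<delta>\<^sup>2/(2*\<sigma>) - t*a*\<delta> + \<sigma>*t\<^sup>2*a\<^sup>2/2"
    using assms by (simp add: field_simps power2_eq_square)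
  ultimately have "t*D \<le> \<sigma>*t\<^sup>2*a\<^sup>2/2" using assms by linarith
  then have "t*D \<le> t*(\<sigma>*t*a\<^sup>2/2)" by (simp add: power2_eq_square algebra_simps)
  then show ?thesis using assms(2) by simp
qed

lemma arith2:
  fixes \<sigma> D a :: real
  assumes "\<sigma> > 0" "D > 0"
  shows "\<not> D \<le> \<sigma>*(D/(\<sigma>*a\<^sup>2+1))*a\<^sup>2/2"
proof
  assume h: "D \<le> \<sigma>*(D/(\<sigma>*a\<^sup>2+1))*a\<^sup>2/2"
  have pos: "\<sigma>*a\<^sup>2+1 > 0" using assms by (simp add: add_nonneg_pos)
  have e: "\<sigma>*(D/(\<sigma>*a\<^sup>2+1))*a\<^sup>2/2 = D * (\<sigma>*a\<^sup>2/(\<sigma>*a\<^sup>2+1)) / 2" by (simp add: algebra_simps)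
  have lt: "\<sigma>*a\<^sup>2/(\<sigma>*a\<^sup>2+1) < 1" using pos by (subst divide_less_eq_1_pos) auto
  have "D * (\<sigma>*a\<^sup>2/(\<sigma>*a\<^sup>2+1)) < D * 1"
    using lt assms(2) by (rule mult_strict_left_mono)
  then have "D * (\<sigma>*a\<^sup>2/(\<sigma>*a\<^sup>2+1)) < D" by simp
  moreover have aux: "X/2 < D" if "X < D" for X :: real using that assms(2) by linarith
  ultimately have "D * (\<sigma>*a\<^sup>2/(\<sigma>*a\<^sup>2+1)) / 2 < D" by blast
  then have "\<sigma>*(D/(\<sigma>*a\<^sup>2+1))*a\<^sup>2/2 < D" unfolding e .
  then show False using h by simp
qed

definition phi :: "real^'n^'m \<Rightarrow> real^'m \<Rightarrow> real^'n \<Rightarrow> ('n::finite \<Rightarrow> ereal) \<Rightarrow> ('n \<Rightarrow> ereal) \<Rightarrow> real \<Rightarrow> real^'m \<Rightarrow> real^'n \<Rightarrow> real" where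
  "phi A b c l u \<sigma> y x = b \<bullet> y + (c - transpose A *v y) \<bullet> projK l u (x - \<sigma> *\<^sub>R (c - transpose A *v y))
      + (1/(2*\<sigma>)) * (norm (projK l u (x - \<sigma> *\<^sub>R (c - transpose A *v y)) - x))\<^sup>2"

lemma Lsig_phi: "Lsig A b c l u \<sigma> y x = - phi A b c l u \<sigma> y x"
  unfolding Lsig_def phi_def Let_def by (simp add: inner_commute)

lemma lsig_feas:
  fixes A :: "real^'n::finite^'m::finite"
  assumes s: "\<sigma> > 0" and ne: "boxK l u \<noteq> {}"
    and min: "\<forall>y'. Lsig A b c l u \<sigma> yb x \<le> Lsig A b c l u \<sigma> y' x"
  shows "A *v projK l u (x - \<sigma> *\<^sub>R (c - transpose A *v yb)) = b"
proof (rule ccontr)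
  define pb where "pb = projK l u (x - \<sigma> *\<^sub>R (c - transpose A *v yb))"
  define wb where "wb = c - transpose A *v yb"
  define d where "d = b - A *v pb"
  assume "A *v projK l u (x - \<sigma> *\<^sub>R (c - transpose A *v yb)) \<noteq> b"
  then have "d \<noteq> 0" unfolding d_def pb_def by simp
  then have Dpos: "d \<bullet> d > 0" by simp
  define a where "a = norm (transpose A *v d)"
  have main: "d \<bullet> d \<le> \<sigma>*t*a\<^sup>2/2" if t: "t > 0" for t
  proof -
    define yt where "yt = yb + t *\<^sub>R d"
    define pt where "pt = projK l u (x - \<sigma> *\<^sub>R (c - transpose A *v yt))"
    have wt: "c - transpose A *v yt = wb - t *\<^sub>R (transpose A *v d)"
      unfolding yt_def wb_def by (simp add: matrix_vector_right_distrib matrix_vector_mult_scaleR algebra_simps)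
    have ptK: "pt \<in> boxK l u" unfolding pt_def by (rule projK_in[OF ne])
    have pi: "wb \<bullet> pt + (1/(2*\<sigma>)) * (norm (pt - x))\<^sup>2 \<ge> wb \<bullet> pb + (1/(2*\<sigma>)) * (norm (pb - x))\<^sup>2 + (1/(2*\<sigma>)) * (norm (pt - pb))\<^sup>2"
      unfolding pb_def wb_def by (rule prox_ineq[OF s ptK])
    have "phi A b c l u \<sigma> yt x \<le> phi A b c l u \<sigma> yb x" using min by (simp add: Lsig_phi)
    moreover have "phi A b c l u \<sigma> yt x = b \<bullet> yt + (c - transpose A *v yt) \<bullet> pt + (1/(2*\<sigma>)) * (norm (pt - x))\<^sup>2"
      unfolding phi_def pt_def by simp
    moreover have "b \<bullet> yt + (c - transpose A *v yt) \<bullet> pt = b \<bullet> yb + t * (b \<bullet> d) + wb \<bullet> pt - t * (d \<bullet> (A *v pt))"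
      unfolding wt by (simp add: yt_def inner_add_right inner_diff_left dot_lmul_matrix)
    moreover have "phi A b c l u \<sigma> yb x = b \<bullet> yb + wb \<bullet> pb + (1/(2*\<sigma>)) * (norm (pb - x))\<^sup>2"
      unfolding phi_def pb_def wb_def by simp
    ultimately have h1: "(1/(2*\<sigma>)) * (norm (pt - pb))\<^sup>2 + t * (b \<bullet> d) - t * (d \<bullet> (A *v pt)) \<le> 0"
      using pi by linarith
    have q1: "(transpose A *v d) \<bullet> (pb - pt) = d \<bullet> (A *v pb) - d \<bullet> (A *v pt)"
      by (metis transp_inner matrix_vector_mult_diff_distrib inner_diff_right)
    have q2: "d \<bullet> d = d \<bullet> (b - A *v pb)" using d_def by metis
    have q3: "d \<bullet> (b - A *v pb) = d \<bullet> b - d \<bullet> (A *v pb)" by (rule inner_diff_right)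
    have q4: "b \<bullet> d = d \<bullet> b" by (rule inner_commute)
    have "(transpose A *v d) \<bullet> (pt - pb) \<le> a * norm (pt - pb)" unfolding a_def by (rule norm_cauchy_schwarz)
    moreover have "(transpose A *v d) \<bullet> (pb - pt) = - ((transpose A *v d) \<bullet> (pt - pb))"
      by (metis inner_minus_right minus_diff_eq)
    ultimately have "b \<bullet> d - d \<bullet> (A *v pt) \<ge> d \<bullet> d - a * norm (pt - pb)" using q1 q2 q3 q4 by linarith
    then have "t * (b \<bullet> d - d \<bullet> (A *v pt)) \<ge> t * (d \<bullet> d - a * norm (pt - pb))"
      using t by (intro mult_left_mono) auto
    then have "t * (b \<bullet> d) - t * (d \<bullet> (A *v pt)) \<ge> t * (d \<bullet> d) - t * a * norm (pt - pb)"
      by (simp only: right_diff_distrib mult.assoc)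
    moreover have "(norm (pt - pb))\<^sup>2/(2*\<sigma>) = (1/(2*\<sigma>)) * (norm (pt - pb))\<^sup>2" by simp
    ultimately have "(norm (pt - pb))\<^sup>2/(2*\<sigma>) + t*(d \<bullet> d) - t*a*(norm (pt - pb)) \<le> 0"
      using h1 by linarith
    then show ?thesis by (rule arith1[OF s t])
  qed
  have "\<sigma>*a\<^sup>2+1 > 0" using s by (simp add: add_nonneg_pos)
  then have "d \<bullet> d / (\<sigma>*a\<^sup>2+1) > 0" using Dpos by simp
  from main[OF this] arith2[OF s Dpos, of a] show False by simp
qed

lemma sq_le0:
  fixes v :: "'a::real_normed_vector"
  assumes s: "\<sigma> > 0" and h: "(1/(2*\<sigma>)) * (norm v)\<^sup>2 \<le> 0"
  shows "v = 0"
proof -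
  have "(1/(2*\<sigma>)) \<ge> 0" using s by simp
  then have "(1/(2*\<sigma>)) * (norm v)\<^sup>2 \<ge> 0" by simp
  then have "(1/(2*\<sigma>)) * (norm v)\<^sup>2 = 0" using h by linarith
  then have "(norm v)\<^sup>2 = 0" using s by simp
  then show ?thesis by simp
qed

lemma prox_opt:
  fixes A :: "real^'n::finite^'m::finite"
  assumes s: "\<sigma> > 0" and Ap: "A *v projK l u (x - \<sigma> *\<^sub>R (c - transpose A *v y)) = b"
    and z: "z \<in> boxK l u" and Az: "A *v z = b"
  shows "c \<bullet> z + (1/(2*\<sigma>)) * (norm (z - x))\<^sup>2 \<ge>
     c \<bullet> projK l u (x - \<sigma> *\<^sub>R (c - transpose A *v y)) + (1/(2*\<sigma>)) * (norm (projK l u (x - \<sigma> *\<^sub>R (c - transpose A *v y)) - x))\<^sup>2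
     + (1/(2*\<sigma>)) * (norm (z - projK l u (x - \<sigma> *\<^sub>R (c - transpose A *v y))))\<^sup>2"
proof -
  define p where "p = projK l u (x - \<sigma> *\<^sub>R (c - transpose A *v y))"
  have pi: "(c - transpose A *v y) \<bullet> z + (1/(2*\<sigma>)) * (norm (z - x))\<^sup>2 \<ge> (c - transpose A *v y) \<bullet> p + (1/(2*\<sigma>)) * (norm (p - x))\<^sup>2 + (1/(2*\<sigma>)) * (norm (z - p))\<^sup>2"
    unfolding p_def by (rule prox_ineq[OF s z])
  have e1: "(c - transpose A *v y) \<bullet> z = c \<bullet> z - y \<bullet> b"
    using Az by (simp only: inner_diff_left transp_inner)
  have e2: "(c - transpose A *v y) \<bullet> p = c \<bullet> p - y \<bullet> b"
    using Ap unfolding p_def[symmetric] by (simp only: inner_diff_left transp_inner)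
  show ?thesis using pi unfolding e1 e2 p_def[symmetric] by linarith
qed

lemma part_a:
  fixes A :: "real^'n::finite^'m::finite"
  assumes s: "\<sigma> > 0" and ne: "boxK l u \<noteq> {}"
    and min: "\<forall>y'. Lsig A b c l u \<sigma> yb x \<le> Lsig A b c l u \<sigma> y' x"
  shows "{z. z \<in> boxK l u \<and> A *v z = b \<and>
                 (\<forall>z'. z' \<in> boxK l u \<and> A *v z' = b \<longrightarrow>
                    c \<bullet> z + (1 / (2 * \<sigma>)) * (norm (z - x))\<^sup>2 \<le> c \<bullet> z' + (1 / (2 * \<sigma>)) * (norm (z' - x))\<^sup>2)}
               = {projK l u (x - \<sigma> *\<^sub>R (c - transpose A *v yb))}"
proof -
  define p where "p = projK l u (x - \<sigma> *\<^sub>R (c - transpose A *v yb))"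
  have Ap: "A *v p = b" unfolding p_def by (rule lsig_feas[OF s ne min])
  have pK: "p \<in> boxK l u" unfolding p_def by (rule projK_in[OF ne])
  have po: "c \<bullet> z + (1/(2*\<sigma>)) * (norm (z - x))\<^sup>2 \<ge> c \<bullet> p + (1/(2*\<sigma>)) * (norm (p - x))\<^sup>2 + (1/(2*\<sigma>)) * (norm (z - p))\<^sup>2"
    if "z \<in> boxK l u" "A *v z = b" for z
    using prox_opt[OF s Ap[unfolded p_def] that] unfolding p_def .
  have nn: "(1/(2*\<sigma>)) * (norm v)\<^sup>2 \<ge> 0" for v :: "real^'n" using s by simp
  show ?thesis unfolding p_def[symmetric]
  proof (intro equalityI subsetI)
    fix z assume "z \<in> {z. z \<in> boxK l u \<and> A *v z = b \<and>
                 (\<forall>z'. z' \<in> boxK l u \<and> A *v z' = b \<longrightarrow>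
                    c \<bullet> z + (1 / (2 * \<sigma>)) * (norm (z - x))\<^sup>2 \<le> c \<bullet> z' + (1 / (2 * \<sigma>)) * (norm (z' - x))\<^sup>2)}"
    then have zK: "z \<in> boxK l u" "A *v z = b"
      and zo: "c \<bullet> z + (1 / (2 * \<sigma>)) * (norm (z - x))\<^sup>2 \<le> c \<bullet> p + (1 / (2 * \<sigma>)) * (norm (p - x))\<^sup>2"
      using pK Ap by auto
    have "(1/(2*\<sigma>)) * (norm (z - p))\<^sup>2 \<le> 0" using po[OF zK] zo by linarith
    then have "z - p = 0" by (rule sq_le0[OF s])
    then show "z \<in> {p}" by simp
  next
    fix z assume "z \<in> {p}"
    then have zp: "z = p" by simp
    show "z \<in> {z. z \<in> boxK l u \<and> A *v z = b \<and>
                 (\<forall>z'. z' \<in> boxK l u \<and> A *v z' = b \<longrightarrow>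
                    c \<bullet> z + (1 / (2 * \<sigma>)) * (norm (z - x))\<^sup>2 \<le> c \<bullet> z' + (1 / (2 * \<sigma>)) * (norm (z' - x))\<^sup>2)}"
      unfolding zp using pK Ap po nn by (smt (verit) mem_Collect_eq)
  qed
qed

lemma part_c:
  fixes A :: "real^'n::finite^'m::finite"
  assumes s: "\<sigma> > 0" and ps: "primal_sol A b c l u x"
    and min: "\<forall>y'. Lsig A b c l u \<sigma> yb x \<le> Lsig A b c l u \<sigma> y' x"
  shows "dual_sol A b c l u yb"
proof -
  have xK: "x \<in> boxK l u" and Ax: "A *v x = b" and xo: "\<And>z. z \<in> boxK l u \<Longrightarrow> A *v z = b \<Longrightarrow> c \<bullet> x \<le> c \<bullet> z"
    using ps unfolding primal_sol_def by auto
  have ne: "boxK l u \<noteq> {}" using xK by blast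
  define w where "w = c - transpose A *v yb"
  define p where "p = projK l u (x - \<sigma> *\<^sub>R w)"
  have Ap: "A *v p = b" unfolding p_def w_def by (rule lsig_feas[OF s ne min])
  have pK: "p \<in> boxK l u" unfolding p_def by (rule projK_in[OF ne])
  have po: "c \<bullet> x + (1/(2*\<sigma>)) * (norm (x - x))\<^sup>2 \<ge> c \<bullet> p + (1/(2*\<sigma>)) * (norm (p - x))\<^sup>2 + (1/(2*\<sigma>)) * (norm (x - p))\<^sup>2"
    using prox_opt[OF s Ap[unfolded p_def w_def] xK Ax] unfolding p_def w_def .
  have "c \<bullet> x \<le> c \<bullet> p" using xo[OF pK Ap] .
  moreover have "(1/(2*\<sigma>)) * (norm (p - x))\<^sup>2 \<ge> 0" using s by simp
  ultimately have "(1/(2*\<sigma>)) * (norm (x - p))\<^sup>2 \<le> 0" using po by simp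
  then have "x - p = 0" by (rule sq_le0[OF s])
  then have px: "p = x" by simp
  have wz: "w \<bullet> (z - x) \<ge> 0" if "z \<in> boxK l u" for z
  proof -
    have "(x - \<sigma> *\<^sub>R w - p) \<bullet> (z - p) \<le> 0" unfolding p_def by (rule projK_dot[OF that])
    then have "- \<sigma> * (w \<bullet> (z - x)) \<le> 0" unfolding px by simp
    then show ?thesis using s by (simp add: zero_le_mult_iff)
  qed
  define v where "v = transpose A *v yb - c"
  have vz: "v \<bullet> z \<le> v \<bullet> x" if "z \<in> boxK l u" for z
    using wz[OF that] unfolding v_def w_def by (simp add: inner_diff_left inner_diff_right inner_commute)
  have sup: "supp_fun (boxK l u) v = ereal (v \<bullet> x)"
    unfolding supp_fun_def
  proof (rule antisym)
    show "(SUP z\<in>boxK l u. ereal (v \<bullet> z)) \<le> ereal (v \<bullet> x)" using vz by (intro SUP_least) simp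
    show "ereal (v \<bullet> x) \<le> (SUP z\<in>boxK l u. ereal (v \<bullet> z))" using xK by (rule SUP_upper)
  qed
  have "v \<bullet> x = yb \<bullet> (A *v x) - c \<bullet> x" unfolding v_def inner_diff_left transp_inner ..
  then have vx: "v \<bullet> x = b \<bullet> yb - c \<bullet> x" using Ax inner_commute[of yb b] by simp
  have dy: "dual_obj A b c l u yb = ereal (c \<bullet> x)"
    unfolding dual_obj_def v_def[symmetric] sup vx by simp
  have dy': "dual_obj A b c l u y' \<le> ereal (c \<bullet> x)" for y'
  proof -
    define v' where "v' = transpose A *v y' - c"
    have "ereal (v' \<bullet> x) \<le> supp_fun (boxK l u) v'" unfolding supp_fun_def using xK by (rule SUP_upper)
    then have "ereal (b \<bullet> y') - supp_fun (boxK l u) v' \<le> ereal (b \<bullet> y') - ereal (v' \<bullet> x)"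
      by (intro ereal_minus_mono) auto
    moreover have "v' \<bullet> x = b \<bullet> y' - c \<bullet> x"
    proof -
      have "v' \<bullet> x = y' \<bullet> (A *v x) - c \<bullet> x" unfolding v'_def inner_diff_left transp_inner ..
      then show ?thesis using Ax inner_commute[of y' b] by simp
    qed
    ultimately show ?thesis unfolding dual_obj_def v'_def[symmetric] by simp
  qed
  show ?thesis unfolding dual_sol_def using dy dy' by simp
qed

lemma arith3:
  fixes R r e :: real
  assumes "R \<ge> 0" "r \<ge> 0" "e \<ge> 0" "R\<^sup>2 \<le> r\<^sup>2 + 2*e*R"
  shows "R \<le> r + 2*e"
proof (rule ccontr)
  assume "\<not> R \<le> r + 2*e"
  then have h: "R > r + 2*e" by simp
  then have Rp: "R > 0" using assms by linarith
  have "R * r < R * (R - 2*e)" using h Rp by (intro mult_strict_left_mono) auto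
  moreover have "r * r \<le> R * r" using h assms by (intro mult_right_mono) auto
  moreover have "R\<^sup>2 = R * (R - 2*e) + 2*e*R" by (simp add: power2_eq_square algebra_simps)
  moreover have "r\<^sup>2 = r * r" by (simp add: power2_eq_square)
  ultimately show False using assms(4) by linarith
qed

lemma fejer_step:
  fixes A :: "real^'n::finite^'m::finite"
  assumes s: "\<sigma> > 0" and tp: "\<tau> > 0" and t': "0 \<le> \<tau>'" "\<tau>' \<le> \<tau>" and e: "\<epsilon> \<ge> 0"
    and xsK: "xs \<in> boxK l u" and Axs: "A *v xs = b"
    and sad: "\<forall>w\<in>boxK l u. (c - transpose A *v ys) \<bullet> (w - xs) \<ge> 0"
    and xn: "xn = projK l u (x - \<sigma> *\<^sub>R (c - transpose A *v yn))"
    and gr: "norm (grad_psi A b c l u \<sigma> \<tau> x y yn) \<le> min (sqrt \<tau>) 1 / \<sigma> * \<epsilon>"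
  shows "sqrt ((norm (xn - xs))\<^sup>2 + \<tau>' * (norm (yn - ys))\<^sup>2)
           \<le> sqrt ((norm (x - xs))\<^sup>2 + \<tau> * (norm (y - ys))\<^sup>2) + 2*\<epsilon>"
proof -
  have ne: "boxK l u \<noteq> {}" using xsK by blast
  have xnK: "xn \<in> boxK l u" unfolding xn by (rule projK_in[OF ne])
  define g where "g = grad_psi A b c l u \<sigma> \<tau> x y yn"
  define W where "W = c - transpose A *v yn"
  have arg: "x + \<sigma> *\<^sub>R (transpose A *v yn - c) = x - \<sigma> *\<^sub>R W"
    unfolding W_def by (simp add: algebra_simps)
  have g_eq: "g = - b + A *v xn + (\<tau>/\<sigma>) *\<^sub>R (yn - y)"
    unfolding g_def grad_psi_def arg xn W_def ..
  have bAx: "b - A *v xn = (\<tau>/\<sigma>) *\<^sub>R (yn - y) - g" unfolding g_eq by (simp add: algebra_simps)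
  have P1: "(x - \<sigma> *\<^sub>R W - xn) \<bullet> (xs - xn) \<le> 0" unfolding xn W_def by (rule projK_dot[OF xsK])
  have P1': "(x - \<sigma> *\<^sub>R W - xn) \<bullet> (xs - xn) = (x - xn) \<bullet> (xs - xn) - \<sigma> * (W \<bullet> (xs - xn))"
    by (simp add: inner_diff_left)
  have P2: "(c - transpose A *v ys) \<bullet> (xn - xs) \<ge> 0" using sad xnK by blast
  have Q1: "W \<bullet> (xs - xn) = c \<bullet> (xs - xn) - yn \<bullet> (A *v (xs - xn))"
    unfolding W_def inner_diff_left transp_inner ..
  have Q2: "(c - transpose A *v ys) \<bullet> (xn - xs) = c \<bullet> (xn - xs) - ys \<bullet> (A *v (xn - xs))"
    unfolding inner_diff_left transp_inner ..
  have A1: "A *v (xs - xn) = b - A *v xn" using Axs by (simp add: matrix_vector_mult_diff_distrib)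
  have A2: "A *v (xn - xs) = - (b - A *v xn)" using Axs by (simp add: matrix_vector_mult_diff_distrib)
  have Q3: "c \<bullet> (xs - xn) + c \<bullet> (xn - xs) = 0" by (simp add: inner_diff_right)
  have Q5: "(ys - yn) \<bullet> (b - A *v xn) = ys \<bullet> (b - A *v xn) - yn \<bullet> (b - A *v xn)" by (rule inner_diff_left)
  have "W \<bullet> (xs - xn) \<le> (ys - yn) \<bullet> (b - A *v xn)"
    using P2 Q1 Q2 Q3 Q5 unfolding A1 A2 inner_minus_right by linarith
  then have "\<sigma> * (W \<bullet> (xs - xn)) \<le> \<sigma> * ((ys - yn) \<bullet> (b - A *v xn))" using s by simp
  moreover have "\<sigma> * ((ys - yn) \<bullet> (b - A *v xn)) = \<tau> * ((ys - yn) \<bullet> (yn - y)) - \<sigma> * ((ys - yn) \<bullet> g)"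
  proof -
    have E2: "(ys - yn) \<bullet> (b - A *v xn) = (\<tau>/\<sigma>) * ((ys - yn) \<bullet> (yn - y)) - (ys - yn) \<bullet> g"
      unfolding bAx by (simp add: inner_diff_right)
    have E3: "\<sigma> * ((\<tau>/\<sigma>) * ((ys - yn) \<bullet> (yn - y)) - (ys - yn) \<bullet> g) = \<tau> * ((ys - yn) \<bullet> (yn - y)) - \<sigma> * ((ys - yn) \<bullet> g)"
      using s by (simp add: algebra_simps)
    show ?thesis unfolding E2 by (rule E3)
  qed
  ultimately have K1: "(x - xn) \<bullet> (xs - xn) \<le> \<tau> * ((ys - yn) \<bullet> (yn - y)) - \<sigma> * ((ys - yn) \<bullet> g)"
    using P1 P1' by linarith
  have I1: "2 * ((x - xn) \<bullet> (xs - xn)) = (norm (x - xn))\<^sup>2 + (norm (xs - xn))\<^sup>2 - (norm (x - xs))\<^sup>2"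
    using dot_norm_neg[of "x - xn" "xs - xn"] by simp
  have I2: "2 * ((ys - yn) \<bullet> (yn - y)) = (norm (ys - y))\<^sup>2 - (norm (ys - yn))\<^sup>2 - (norm (yn - y))\<^sup>2"
    using dot_norm[of "ys - yn" "yn - y"] by simp
  define n where "n = norm (yn - ys)"
  have n0: "n \<ge> 0" unfolding n_def by simp
  have CS: "- ((ys - yn) \<bullet> g) \<le> n * norm g"
  proof -
    have "(yn - ys) \<bullet> g \<le> n * norm g" unfolding n_def by (rule norm_cauchy_schwarz)
    moreover have "(ys - yn) \<bullet> g = - ((yn - ys) \<bullet> g)" by (metis inner_minus_left minus_diff_eq)
    ultimately show ?thesis by linarith
  qed
  have sg: "\<sigma> * norm g \<le> sqrt \<tau> * \<epsilon>"
  proof -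
    have "norm g \<le> min (sqrt \<tau>) 1 / \<sigma> * \<epsilon>" using gr unfolding g_def .
    also have "\<dots> \<le> sqrt \<tau> / \<sigma> * \<epsilon>" using s e by (intro mult_right_mono divide_right_mono) auto
    finally have ng: "norm g \<le> sqrt \<tau> / \<sigma> * \<epsilon>" .
    have "\<sigma> * norm g \<le> \<sigma> * (sqrt \<tau> / \<sigma> * \<epsilon>)" using s ng by (intro mult_left_mono) auto
    moreover have "\<sigma> * (sqrt \<tau> / \<sigma> * \<epsilon>) = sqrt \<tau> * \<epsilon>" using s by simp
    ultimately show ?thesis by simp
  qed
  have I2': "2 * (\<tau> * ((ys - yn) \<bullet> (yn - y))) = \<tau> * (norm (ys - y))\<^sup>2 - \<tau> * (norm (ys - yn))\<^sup>2 - \<tau> * (norm (yn - y))\<^sup>2"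
  proof -
    have "2 * (\<tau> * ((ys - yn) \<bullet> (yn - y))) = \<tau> * (2 * ((ys - yn) \<bullet> (yn - y)))" by simp
    also have "\<dots> = \<tau> * ((norm (ys - y))\<^sup>2 - (norm (ys - yn))\<^sup>2 - (norm (yn - y))\<^sup>2)" unfolding I2 ..
    finally show ?thesis by (simp add: right_diff_distrib)
  qed
  have nn1: "(norm (x - xn))\<^sup>2 \<ge> 0" by simp
  have nn2: "\<tau> * (norm (yn - y))\<^sup>2 \<ge> 0" using tp by simp
  have M1: "(norm (xs - xn))\<^sup>2 + \<tau> * (norm (ys - yn))\<^sup>2 \<le> (norm (x - xs))\<^sup>2 + \<tau> * (norm (ys - y))\<^sup>2 - 2 * (\<sigma> * ((ys - yn) \<bullet> g))"
    using K1 I1 I2' nn1 nn2 by linarith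
  have "\<sigma> * (- ((ys - yn) \<bullet> g)) \<le> \<sigma> * (n * norm g)" using CS s by (intro mult_left_mono) auto
  then have M2: "- (\<sigma> * ((ys - yn) \<bullet> g)) \<le> \<sigma> * (n * norm g)" by simp
  have M3: "\<sigma> * (n * norm g) \<le> n * (sqrt \<tau> * \<epsilon>)"
  proof -
    have "n * (\<sigma> * norm g) \<le> n * (sqrt \<tau> * \<epsilon>)" using sg n0 by (rule mult_left_mono)
    then show ?thesis by (simp add: algebra_simps)
  qed
  have N1: "(norm (xs - xn))\<^sup>2 = (norm (xn - xs))\<^sup>2" by (simp add: norm_minus_commute)
  have N2: "(norm (ys - yn))\<^sup>2 = n\<^sup>2" unfolding n_def by (simp add: norm_minus_commute)
  have N3: "(norm (ys - y))\<^sup>2 = (norm (y - ys))\<^sup>2" by (simp add: norm_minus_commute)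
  have H: "(norm (xn - xs))\<^sup>2 + \<tau> * n\<^sup>2 \<le> (norm (x - xs))\<^sup>2 + \<tau> * (norm (y - ys))\<^sup>2 + 2 * (n * (sqrt \<tau> * \<epsilon>))"
    using M1 M2 M3 unfolding N1 N2 N3 by linarith
  define Rn where "Rn = sqrt ((norm (xn - xs))\<^sup>2 + \<tau> * n\<^sup>2)"
  define r where "r = sqrt ((norm (x - xs))\<^sup>2 + \<tau> * (norm (y - ys))\<^sup>2)"
  have Rn0: "Rn \<ge> 0" unfolding Rn_def using tp by simp
  have r0: "r \<ge> 0" unfolding r_def using tp by simp
  have Rn2: "Rn\<^sup>2 = (norm (xn - xs))\<^sup>2 + \<tau> * n\<^sup>2" unfolding Rn_def using tp by simp
  have r2: "r\<^sup>2 = (norm (x - xs))\<^sup>2 + \<tau> * (norm (y - ys))\<^sup>2" unfolding r_def using tp by simp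
  have "sqrt \<tau> * n = sqrt (\<tau> * n\<^sup>2)" using n0 by (simp add: real_sqrt_mult)
  also have "\<dots> \<le> Rn" unfolding Rn_def by (intro real_sqrt_le_mono) simp
  finally have tn: "sqrt \<tau> * n \<le> Rn" .
  have "2 * (n * (sqrt \<tau> * \<epsilon>)) = 2 * \<epsilon> * (sqrt \<tau> * n)" by (simp add: algebra_simps)
  also have "\<dots> \<le> 2 * \<epsilon> * Rn" using tn e by (intro mult_left_mono) auto
  finally have "Rn\<^sup>2 \<le> r\<^sup>2 + 2 * \<epsilon> * Rn" using H Rn2 r2 by linarith
  then have "Rn \<le> r + 2 * \<epsilon>" by (rule arith3[OF Rn0 r0 e])
  moreover have "sqrt ((norm (xn - xs))\<^sup>2 + \<tau>' * (norm (yn - ys))\<^sup>2) \<le> Rn"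
    unfolding Rn_def n_def using t' by (intro real_sqrt_le_mono add_left_mono mult_right_mono) auto
  ultimately show ?thesis unfolding r_def by linarith
qed

theorem mainTheorem11:
  fixes A :: "real^'n^'m" and b :: "real^'m" and c :: "real^'n"
    and l u :: "'n \<Rightarrow> ereal"
    and x :: "nat \<Rightarrow> real^'n" and y :: "nat \<Rightarrow> real^'m"
    and \<sigma> \<tau> \<epsilon> :: "nat \<Rightarrow> real" and \<tau>inf :: real
    and ybar :: "nat \<Rightarrow> real^'m"
  assumes l_fin: "\<forall>i. l i \<noteq> \<infinity>" and u_fin: "\<forall>i. u i \<noteq> -\<infinity>"
    and P_solvable: "\<exists>xs. primal_sol A b c l u xs"
    and D_solvable: "\<exists>ys. dual_sol A b c l u ys"
    and full_row_rank: "rank A = CARD('m)"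
    and sigma_pos: "\<sigma> 0 > 0" and sigma_mono: "incseq \<sigma>"
    and tau_pos: "\<forall>k. \<tau> k > 0" and tau_dec: "decseq \<tau>"
    and tau_lim: "\<tau> \<longlonglongrightarrow> \<tau>inf" and tau_inf_pos: "\<tau>inf > 0"
    and x_update: "\<forall>k. x (Suc k) = projK l u (x k - \<sigma> k *\<^sub>R (c - transpose A *v y (Suc k)))"
    and stop_A': "\<forall>k. norm (grad_psi A b c l u (\<sigma> k) (\<tau> k) (x k) (y k) (y (Suc k)))
                     \<le> min (sqrt (\<tau> k)) 1 / \<sigma> k * \<epsilon> k"
    and eps_nonneg: "\<forall>k. \<epsilon> k \<ge> 0" and eps_summable: "summable \<epsilon>"
    and ybar_min: "\<forall>k. \<forall>y'. Lsig A b c l u (\<sigma> k) (ybar (Suc k)) (x k) \<le> Lsig A b c l u (\<sigma> k) y' (x k)"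
  shows "(\<forall>k. {z. z \<in> boxK l u \<and> A *v z = b \<and>
                 (\<forall>z'. z' \<in> boxK l u \<and> A *v z' = b \<longrightarrow>
                    c \<bullet> z + (1 / (2 * \<sigma> k)) * (norm (z - x k))\<^sup>2 \<le> c \<bullet> z' + (1 / (2 * \<sigma> k)) * (norm (z' - x k))\<^sup>2)}
               = {projK l u (x k - \<sigma> k *\<^sub>R (c - transpose A *v ybar (Suc k)))})
       \<and> (\<exists>\<sigma>bar > 0. \<forall>k. \<sigma> k \<ge> \<sigma>bar \<longrightarrow>
             primal_sol A b c l u (projK l u (x k - \<sigma> k *\<^sub>R (c - transpose A *v ybar (Suc k)))))
       \<and> (\<forall>k. primal_sol A b c l u (x k) \<longrightarrow> dual_sol A b c l u (ybar (Suc k)))"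
proof -
  have sig_pos: "\<sigma> k > 0" for k
  proof -
    have "\<sigma> 0 \<le> \<sigma> k" using sigma_mono unfolding incseq_def by simp
    then show ?thesis using sigma_pos by linarith
  qed
  have ymin: "\<forall>y'. Lsig A b c l u (\<sigma> k) (ybar (Suc k)) (x k) \<le> Lsig A b c l u (\<sigma> k) y' (x k)" for k
    using ybar_min by blast
  obtain xs where ps: "primal_sol A b c l u xs" using P_solvable by blast
  have xsK: "xs \<in> boxK l u" and Axs: "A *v xs = b" using ps unfolding primal_sol_def by auto
  have ne: "boxK l u \<noteq> {}" using xsK by blast
  have PA: "\<forall>k. {z. z \<in> boxK l u \<and> A *v z = b \<and>
                 (\<forall>z'. z' \<in> boxK l u \<and> A *v z' = b \<longrightarrow>
                    c \<bullet> z + (1 / (2 * \<sigma> k)) * (norm (z - x k))\<^sup>2 \<le> c \<bullet> z' + (1 / (2 * \<sigma> k)) * (norm (z' - x k))\<^sup>2)}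
               = {projK l u (x k - \<sigma> k *\<^sub>R (c - transpose A *v ybar (Suc k)))}"
    using part_a[OF sig_pos ne ymin] by blast
  have PC: "\<forall>k. primal_sol A b c l u (x k) \<longrightarrow> dual_sol A b c l u (ybar (Suc k))"
    using part_c[OF sig_pos _ ymin] by blast
  have "c \<in> MP A (pat l u xs)" by (rule kkt_exists[OF ps])
  then obtain ys h where cys: "c = transpose A *v ys + h" and hC: "h \<in> Cp (pat l u xs)" unfolding MP_def by blast
  have sad: "\<forall>w\<in>boxK l u. (c - transpose A *v ys) \<bullet> (w - xs) \<ge> 0"
  proof
    fix w assume "w \<in> boxK l u"
    moreover have "c - transpose A *v ys = h" using cys by simp
    ultimately show "(c - transpose A *v ys) \<bullet> (w - xs) \<ge> 0" using Cp_normal[OF xsK _ hC] by simp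
  qed
  define r where "r k = sqrt ((norm (x k - xs))\<^sup>2 + \<tau> k * (norm (y k - ys))\<^sup>2)" for k
  have step: "r (Suc k) \<le> r k + 2 * \<epsilon> k" for k
  proof -
    have t': "0 \<le> \<tau> (Suc k)" "\<tau> (Suc k) \<le> \<tau> k" using tau_pos tau_dec unfolding decseq_def
      by (auto simp: less_imp_le)
    show ?thesis unfolding r_def
      by (rule fejer_step[OF sig_pos[of k] tau_pos[rule_format, of k] t' eps_nonneg[rule_format, of k] xsK Axs sad
               x_update[rule_format, of k] stop_A'[rule_format, of k]])
  qed
  have rsum: "r k \<le> r 0 + 2 * (\<Sum>i<k. \<epsilon> i)" for k
  proof (induction k)
    case 0 then show ?case by simp
  next
    case (Suc k) then show ?case using step[of k] by simp
  qed
  define B where "B = r 0 + 2 * suminf \<epsilon>"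
  have sumle: "(\<Sum>i<k. \<epsilon> i) \<le> suminf \<epsilon>" for k
    using eps_summable eps_nonneg by (intro sum_le_suminf) auto
  have r0: "r 0 \<ge> 0" unfolding r_def using tau_pos by (simp add: less_imp_le)
  have B0: "B \<ge> 0" unfolding B_def using r0 suminf_nonneg[OF eps_summable] eps_nonneg by simp
  have xbd: "norm (x k - xs) \<le> B" for k
  proof -
    have "norm (x k - xs) = sqrt ((norm (x k - xs))\<^sup>2)" by simp
    also have "\<dots> \<le> r k" unfolding r_def using tau_pos by (intro real_sqrt_le_mono) (simp add: less_imp_le)
    also have "\<dots> \<le> B" unfolding B_def using rsum[of k] sumle[of k] by linarith
    finally show ?thesis .
  qed
  have "\<forall>P. \<exists>e>0. c \<notin> MP A P \<longrightarrow> (\<forall>m\<in>MP A P. e \<le> dist c m)"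
  proof
    fix P
    show "\<exists>e>0. c \<notin> MP A P \<longrightarrow> (\<forall>m\<in>MP A P. e \<le> dist c m)"
    proof (cases "c \<in> MP A P")
      case True then show ?thesis by (intro exI[of _ 1]) auto
    next
      case False
      have "open (- MP A P)" using MP_closed[of A P] by (simp add: open_Compl)
      then obtain e where "e > 0" "ball c e \<subseteq> - MP A P" using False open_contains_ball by blast
      then have "\<forall>m\<in>MP A P. e \<le> dist c m" by (auto simp: subset_iff not_less)
      then show ?thesis using \<open>e > 0\<close> by blast
    qed
  qed
  then obtain E where E: "\<And>P. E P > 0" "\<And>P. c \<notin> MP A P \<Longrightarrow> (\<forall>m\<in>MP A P. E P \<le> dist c m)" by metis
  define \<delta> where "\<delta> = Min (range E)"
  have finE: "finite (range E)" by simp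
  have \<delta>pos: "\<delta> > 0" unfolding \<delta>_def using E(1) finE by (subst Min_gr_iff) auto
  have \<delta>le: "\<delta> \<le> E P" for P unfolding \<delta>_def using finE by (intro Min_le) auto
  define sb where "sb = B / \<delta> + 1"
  have sbpos: "sb > 0" unfolding sb_def using B0 \<delta>pos by (simp add: add_nonneg_pos)
  have Bsb: "B / sb < \<delta>"
  proof -
    have "B < \<delta> * sb" unfolding sb_def using \<delta>pos by (simp add: algebra_simps)
    then show ?thesis using sbpos by (simp add: divide_less_eq mult.commute)
  qed
  have PB: "\<forall>k. \<sigma> k \<ge> sb \<longrightarrow> primal_sol A b c l u (projK l u (x k - \<sigma> k *\<^sub>R (c - transpose A *v ybar (Suc k))))"
  proof (intro allI impI)
    fix k assume sk: "\<sigma> k \<ge> sb"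
    define s where "s = \<sigma> k"
    define xk where "xk = x k"
    define yb where "yb = ybar (Suc k)"
    define xb where "xb = projK l u (xk - s *\<^sub>R (c - transpose A *v yb))"
    have s0: "s > 0" unfolding s_def by (rule sig_pos)
    have Ab: "A *v xb = b" unfolding xb_def s_def xk_def yb_def by (rule lsig_feas[OF sig_pos ne ymin])
    have xbK: "xb \<in> boxK l u" unfolding xb_def by (rule projK_in[OF ne])
    have po: "c \<bullet> xs + (1/(2 * s)) * (norm (xs - xk))\<^sup>2 \<ge> c \<bullet> xb + (1/(2 * s)) * (norm (xb - xk))\<^sup>2 + (1/(2 * s)) * (norm (xs - xb))\<^sup>2"
      using prox_opt[OF s0 Ab[unfolded xb_def] xsK Axs] unfolding xb_def .
    have "c \<bullet> xs \<le> c \<bullet> xb" using ps xbK Ab unfolding primal_sol_def by blast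
    moreover have "(1/(2 * s)) * (norm (xs - xb))\<^sup>2 \<ge> 0" using s0 by simp
    ultimately have hh: "(1/(2 * s)) * (norm (xb - xk))\<^sup>2 \<le> (1/(2 * s)) * (norm (xs - xk))\<^sup>2" using po by linarith
    have c0: "1/(2 * s) > 0" using s0 by simp
    have "(norm (xb - xk))\<^sup>2 \<le> (norm (xs - xk))\<^sup>2" by (rule mult_left_le_imp_le[OF hh c0])
    then have "norm (xb - xk) \<le> norm (xs - xk)" by (rule power2_le_imp_le) simp
    also have "\<dots> \<le> B" using xbd[of k] unfolding xk_def by (simp add: norm_minus_commute)
    finally have dxb: "norm (xb - xk) \<le> B" .
    define g where "g = (c - transpose A *v yb) + (1/s) *\<^sub>R (xb - xk)"
    have eqg: "xk - s *\<^sub>R (c - transpose A *v yb) - xb = - (s *\<^sub>R g)"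
      unfolding g_def using s0 by (simp add: algebra_simps)
    have "\<forall>w\<in>boxK l u. g \<bullet> (w - xb) \<ge> 0"
    proof
      fix w assume "w \<in> boxK l u"
      then have "(xk - s *\<^sub>R (c - transpose A *v yb) - xb) \<bullet> (w - xb) \<le> 0" unfolding xb_def by (rule projK_dot)
      then have "- (s * (g \<bullet> (w - xb))) \<le> 0" unfolding eqg by simp
      then show "g \<bullet> (w - xb) \<ge> 0" using s0 by (simp add: zero_le_mult_iff)
    qed
    then have gC: "g \<in> Cp (pat l u xb)" by (rule normal_Cp[OF xbK])
    define m where "m = transpose A *v yb + g"
    have mM: "m \<in> MP A (pat l u xb)" unfolding MP_def m_def using gC by blast
    have "c - m = - ((1/s) *\<^sub>R (xb - xk))" unfolding m_def g_def by (simp add: algebra_simps)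
    then have "dist c m = (1/s) * norm (xb - xk)" using s0 by (simp add: dist_norm)
    also have "\<dots> \<le> B / s" using dxb s0 by (simp add: divide_right_mono)
    also have "\<dots> \<le> B / sb" using B0 sk sbpos unfolding s_def by (intro divide_left_mono) auto
    finally have dcm: "dist c m < \<delta>" using Bsb by linarith
    have "c \<in> MP A (pat l u xb)"
    proof (rule ccontr)
      assume "c \<notin> MP A (pat l u xb)"
      then have "E (pat l u xb) \<le> dist c m" using E(2) mM by blast
      then show False using \<delta>le[of "pat l u xb"] dcm by linarith
    qed
    then obtain y' h' where "c = transpose A *v y' + h'" "h' \<in> Cp (pat l u xb)" unfolding MP_def by blast
    then have "c - transpose A *v y' \<in> Cp (pat l u xb)" by simp
    then have "primal_sol A b c l u xb" by (rule kkt_opt[OF xbK Ab])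
    then show "primal_sol A b c l u (projK l u (x k - \<sigma> k *\<^sub>R (c - transpose A *v ybar (Suc k))))"
      unfolding xb_def s_def xk_def yb_def .
  qed
  show ?thesis using PA PB PC sbpos by blast
qed

end
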